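(* For all $m,n\ge 0$, the subgroup $\mathrm{GL}(m)\times\mathrm{GL}(n)\subset\mathrm{GL}(m+n)$ is parabolically connected; equivalently, for any decomposition $V=U\oplus W$ with $\dim U=m$, $\dim W=n$ and any full flag $V_\bullet$ in $V$, the group $(\mathrm{GL}(U)\times\mathrm{GL}(W))\cap\mathrm{Stab}(V_\bullet)$ is connected.
   Context: All groups are over $\mathbb{C}$ with the Zariski topology. $\mathrm{GL}(m)\times\mathrm{GL}(n)$ is embedded in $\mathrm{GL}(m+n)$ as block-diagonal matrices (equivalently $\mathrm{GL}(U)\times\mathrm{GL}(W)\subset\mathrm{GL}(U\oplus W)$). A closed subgroup $H$ of a reductive group $G$ is parabolically connected if $P\cap H$ is connected for every parabolic subgroup $P\subseteq G$. A full flag is a chain $0\subset V_1\subset\dots\subset V_{m+n}=V$ with $\dim V_i=i$; $\mathrm{Stab}(V_\bullet)$ is the subgroup of $\mathrm{GL}(V)$ preserving every $V_i$. *)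

theory Defs
  imports Complex_Main
begin

text \<open>Conventions. V = C^N with N = m+n. Vectors are functions nat => complex vanishing
outside {0..<N}; N x N matrices are functions nat => nat => complex vanishing outside
{0..<N} x {0..<N}.\<close>

definition vecs :: "nat \<Rightarrow> (nat \<Rightarrow> complex) set" where
  "vecs N = {v. \<forall>i. N \<le> i \<longrightarrow> v i = 0}"

definition mats :: "nat \<Rightarrow> (nat \<Rightarrow> nat \<Rightarrow> complex) set" where
  "mats N = {A. \<forall>i j. (N \<le> i \<or> N \<le> j) \<longrightarrow> A i j = 0}"

definition mat_mult :: "nat \<Rightarrow> (nat \<Rightarrow> nat \<Rightarrow> complex) \<Rightarrow> (nat \<Rightarrow> nat \<Rightarrow> complex) \<Rightarrow> (nat \<Rightarrow> nat \<Rightarrow> complex)" where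
  "mat_mult N A B = (\<lambda>i j. if i < N \<and> j < N then (\<Sum>k<N. A i k * B k j) else 0)"

definition mat_one :: "nat \<Rightarrow> (nat \<Rightarrow> nat \<Rightarrow> complex)" where
  "mat_one N = (\<lambda>i j. if i < N \<and> i = j then 1 else 0)"

definition mat_vec :: "nat \<Rightarrow> (nat \<Rightarrow> nat \<Rightarrow> complex) \<Rightarrow> (nat \<Rightarrow> complex) \<Rightarrow> (nat \<Rightarrow> complex)" where
  "mat_vec N A v = (\<lambda>i. if i < N then (\<Sum>j<N. A i j * v j) else 0)"

definition GL :: "nat \<Rightarrow> (nat \<Rightarrow> nat \<Rightarrow> complex) set" where
  "GL N = {A \<in> mats N. \<exists>B \<in> mats N. mat_mult N A B = mat_one N \<and> mat_mult N B A = mat_one N}"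

definition span_cols :: "nat \<Rightarrow> (nat \<Rightarrow> nat \<Rightarrow> complex) \<Rightarrow> nat set \<Rightarrow> (nat \<Rightarrow> complex) set" where
  "span_cols N g S = {mat_vec N g c | c. c \<in> vecs N \<and> (\<forall>k. k \<notin> S \<longrightarrow> c k = 0)}"

text \<open>The full flag determined by an invertible matrix F: V_i = span of first i columns.\<close>
definition flag_space :: "nat \<Rightarrow> (nat \<Rightarrow> nat \<Rightarrow> complex) \<Rightarrow> nat \<Rightarrow> (nat \<Rightarrow> complex) set" where
  "flag_space N F i = span_cols N F {0..<i}"

inductive_set poly_fun :: "((nat \<Rightarrow> nat \<Rightarrow> complex) \<Rightarrow> complex) set" where
  const: "(\<lambda>A. c) \<in> poly_fun"
| entry: "(\<lambda>A. A i j) \<in> poly_fun"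
| add: "p \<in> poly_fun \<Longrightarrow> q \<in> poly_fun \<Longrightarrow> (\<lambda>A. p A + q A) \<in> poly_fun"
| mult: "p \<in> poly_fun \<Longrightarrow> q \<in> poly_fun \<Longrightarrow> (\<lambda>A. p A * q A) \<in> poly_fun"

definition zariski_closed :: "nat \<Rightarrow> (nat \<Rightarrow> nat \<Rightarrow> complex) set \<Rightarrow> bool" where
  "zariski_closed N C \<longleftrightarrow> (\<exists>P \<subseteq> poly_fun. C = {A \<in> mats N. \<forall>p \<in> P. p A = 0})"

definition zariski_connected :: "nat \<Rightarrow> (nat \<Rightarrow> nat \<Rightarrow> complex) set \<Rightarrow> bool" where
  "zariski_connected N H \<longleftrightarrow>
     \<not> (\<exists>C1 C2. zariski_closed N C1 \<and> zariski_closed N C2 \<and> H \<subseteq> C1 \<union> C2 \<and>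
               H \<inter> C1 \<inter> C2 = {} \<and> H \<inter> C1 \<noteq> {} \<and> H \<inter> C2 \<noteq> {})"

end

theory Submission
  imports Defs "HOL-Library.Function_Algebras" "Jordan_Normal_Form.Determinant"
begin


lemma (in vector_space) inj_endo_onto:
  assumes S: "subspace S" and T: "finite T" "S \<subseteq> span T"
    and f: "Vector_Spaces.linear scale scale f" and inj: "inj_on f S" and sub: "f ` S \<subseteq> S"
  shows "f ` S = S"
proof -
  interpret fh: module_hom scale scale f using f by (simp add: linear_iff_module_hom)
  obtain B where B: "B \<subseteq> S" "independent B" "S \<subseteq> span B" "card B = dim S"
    using basis_exists by blast
  have fB: "finite B" using independent_span_bound[OF T(1) B(2)] B(1) T(2) by blast
  have spB: "span B = S" using B S span_minimal by (meson span_subspace)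
  have indf: "independent (f ` B)"
    using fh.independent_inj_on_image[OF B(2)] inj spB by simp
  have cardf: "card (f ` B) = card B" using card_image inj B(1) inj_on_subset by metis
  have "S \<subseteq> span (f ` B)"
  proof
    fix a assume a: "a \<in> S"
    show "a \<in> span (f ` B)"
    proof (rule ccontr)
      assume na: "a \<notin> span (f ` B)"
      have ind2: "independent (insert a (f ` B))" using independent_insertI[OF na indf] .
      have "insert a (f ` B) \<subseteq> span B" using a B sub spB by auto
      from independent_span_bound[OF fB ind2 this]
      have "card (insert a (f ` B)) \<le> card B" by simp
      moreover have "a \<notin> f ` B" using na span_base by blast
      ultimately show False using cardf fB by simp
    qed
  qed
  also have "span (f ` B) = f ` span B" by (rule fh.span_image)
  finally show ?thesis using spB sub by auto
qed



definition sc :: "complex \<Rightarrow> (nat \<Rightarrow> complex) \<Rightarrow> (nat \<Rightarrow> complex)" where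
  "sc c v = (\<lambda>i. c * v i)"

interpretation cv: vector_space sc
  by unfold_locales (auto simp: sc_def algebra_simps)

lemma mat_vec_add: "mat_vec N A (v + w) = mat_vec N A v + mat_vec N A w"
  by (auto simp: mat_vec_def algebra_simps sum.distrib)

lemma mat_vec_sc: "mat_vec N A (sc c v) = sc c (mat_vec N A v)"
  by (auto simp: mat_vec_def sc_def sum_distrib_left algebra_simps intro!: sum.cong)

lemma mat_vec_linear: "Vector_Spaces.linear sc sc (mat_vec N A)"
  unfolding linear_iff_module_hom module_hom_iff
  using cv.module_axioms by (simp add: mat_vec_add mat_vec_sc)

lemma mat_vec_mult: "mat_vec N B (mat_vec N A v) = mat_vec N (mat_mult N B A) v"
proof
  fix i
  show "mat_vec N B (mat_vec N A v) i = mat_vec N (mat_mult N B A) v i"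
  proof (cases "i < N")
    case True
    have "(\<Sum>j<N. B i j * (\<Sum>k<N. A j k * v k)) = (\<Sum>j<N. \<Sum>k<N. B i j * A j k * v k)"
      by (simp add: sum_distrib_left mult.assoc)
    also have "\<dots> = (\<Sum>k<N. \<Sum>j<N. B i j * A j k * v k)" by (rule sum.swap)
    also have "\<dots> = (\<Sum>k<N. (\<Sum>j<N. B i j * A j k) * v k)"
      by (simp add: sum_distrib_right)
    finally show ?thesis using True by (simp add: mat_vec_def mat_mult_def)
  qed (simp add: mat_vec_def)
qed

lemma mat_vec_one: "v \<in> vecs N \<Longrightarrow> mat_vec N (mat_one N) v = v"
proof
  fix i assume v: "v \<in> vecs N"
  show "mat_vec N (mat_one N) v i = v i"
  proof (cases "i < N")
    case True
    have "(\<Sum>j<N. (if i < N \<and> i = j then 1 else 0) * v j) = (\<Sum>j<N. if j = i then v i else 0)"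
      by (rule sum.cong) auto
    then show ?thesis using True by (simp add: mat_vec_def mat_one_def)
  qed (use v in \<open>auto simp: mat_vec_def vecs_def\<close>)
qed

lemma mat_vec_vecs: "mat_vec N A v \<in> vecs N"
  by (simp add: mat_vec_def vecs_def)

lemma span_cols_subspace: "cv.subspace (span_cols N X I)"
  unfolding cv.subspace_def
proof (intro conjI ballI allI)
  show "0 \<in> span_cols N X I"
    unfolding span_cols_def
    by (rule CollectI, rule exI[of _ 0]) (auto simp: mat_vec_def vecs_def)
next
  fix x y assume "x \<in> span_cols N X I" "y \<in> span_cols N X I"
  then obtain c d where "x = mat_vec N X c" "c \<in> vecs N" "\<forall>k. k \<notin> I \<longrightarrow> c k = 0"
     "y = mat_vec N X d" "d \<in> vecs N" "\<forall>k. k \<notin> I \<longrightarrow> d k = 0"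
    unfolding span_cols_def by blast
  then show "x + y \<in> span_cols N X I"
    unfolding span_cols_def
    by (intro CollectI exI[of _ "c + d"]) (auto simp: mat_vec_add vecs_def)
next
  fix a x assume "x \<in> span_cols N X I"
  then obtain c where "x = mat_vec N X c" "c \<in> vecs N" "\<forall>k. k \<notin> I \<longrightarrow> c k = 0"
    unfolding span_cols_def by blast
  then show "sc a x \<in> span_cols N X I"
    unfolding span_cols_def
  proof (intro CollectI exI[of _ "sc a c"] conjI)
    show "sc a x = mat_vec N X (sc a c)" using \<open>x = mat_vec N X c\<close> by (simp add: mat_vec_sc)
  qed (use \<open>c \<in> vecs N\<close> \<open>\<forall>k. k \<notin> I \<longrightarrow> c k = 0\<close> in \<open>auto simp: vecs_def sc_def\<close>)
qed


definition ev :: "nat \<Rightarrow> nat \<Rightarrow> complex" where "ev k = (\<lambda>i. if i = k then 1 else 0)"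

lemma vecs_span: "vecs N \<subseteq> cv.span (ev ` {..<N})"
proof
  fix v assume v: "v \<in> vecs N"
  have "v = (\<Sum>k<N. sc (v k) (ev k))"
  proof
    fix i
    have "(\<Sum>k<N. sc (v k) (ev k)) i = (\<Sum>k<N. sc (v k) (ev k) i)"
      by (induction N) (simp_all add: plus_fun_def)
    also have "\<dots> = (\<Sum>k<N. if k = i then v i else 0)"
      by (rule sum.cong) (auto simp: sc_def ev_def)
    also have "\<dots> = v i" using v by (auto simp: vecs_def)
    finally show "v i = (\<Sum>k<N. sc (v k) (ev k)) i" by simp
  qed
  also have "\<dots> \<in> cv.span (ev ` {..<N})"
  proof (rule cv.span_sum)
    fix k assume "k \<in> {..<N}"
    then have "ev k \<in> cv.span (ev ` {..<N})" by (intro cv.span_base) simp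
    then show "sc (v k) (ev k) \<in> cv.span (ev ` {..<N})" by (rule cv.span_scale)
  qed
  finally show "v \<in> cv.span (ev ` {..<N})" .
qed

lemma span_cols_vecs: "span_cols N X I \<subseteq> vecs N"
  unfolding span_cols_def using mat_vec_vecs by blast

lemma GL_onto:
  assumes A: "A \<in> GL N" and sub: "mat_vec N A ` span_cols N X I \<subseteq> span_cols N X I"
  shows "mat_vec N A ` span_cols N X I = span_cols N X I"
proof (rule cv.inj_endo_onto[OF span_cols_subspace _ _ mat_vec_linear _ sub])
  show "finite (ev ` {..<N})" by simp
  show "span_cols N X I \<subseteq> cv.span (ev ` {..<N})" using span_cols_vecs vecs_span by blast
  obtain B where "mat_mult N B A = mat_one N" using A unfolding GL_def by blast
  then have BA: "\<And>v. v \<in> vecs N \<Longrightarrow> mat_vec N B (mat_vec N A v) = v"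
    by (simp add: mat_vec_mult mat_vec_one)
  show "inj_on (mat_vec N A) (span_cols N X I)"
  proof (rule inj_onI)
    fix x y assume "x \<in> span_cols N X I" "y \<in> span_cols N X I" "mat_vec N A x = mat_vec N A y"
    then show "x = y" using span_cols_vecs BA
      by (metis subsetD)
  qed
qed




definition toM :: "nat \<Rightarrow> (nat \<Rightarrow> nat \<Rightarrow> complex) \<Rightarrow> complex mat" where
  "toM N A = mat N N (\<lambda>(i,j). A i j)"

definition fromM :: "nat \<Rightarrow> complex mat \<Rightarrow> (nat \<Rightarrow> nat \<Rightarrow> complex)" where
  "fromM N M = (\<lambda>i j. if i < N \<and> j < N then M $$ (i,j) else 0)"

lemma toM_carrier[simp]: "toM N A \<in> carrier_mat N N" by (simp add: toM_def)

lemma toM_mult: "toM N (mat_mult N A B) = toM N A * toM N B"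
  by (rule eq_matI) (simp_all add: toM_def mat_mult_def scalar_prod_def atLeast0LessThan)

lemma toM_one: "toM N (mat_one N) = 1\<^sub>m N"
  by (rule eq_matI) (auto simp: toM_def mat_one_def)

lemma toM_fromM: "M \<in> carrier_mat N N \<Longrightarrow> toM N (fromM N M) = M"
  by (rule eq_matI) (auto simp: toM_def fromM_def)

lemma toM_inj:
  assumes "A \<in> mats N" "B \<in> mats N" and eq: "toM N A = toM N B"
  shows "A = B"
proof (intro ext)
  fix i j
  show "A i j = B i j"
  proof (cases "i < N \<and> j < N")
    case True
    then have "toM N A $$ (i,j) = toM N B $$ (i,j)" using eq by simp
    then show ?thesis using True by (simp add: toM_def)
  next
    case False
    then show ?thesis using assms(1,2) by (auto simp: mats_def)
  qed
qed

lemma mat_mult_mats: "mat_mult N A B \<in> mats N" by (simp add: mats_def mat_mult_def)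
lemma mat_one_mats: "mat_one N \<in> mats N" by (simp add: mats_def mat_one_def)
lemma fromM_mats: "fromM N M \<in> mats N" by (simp add: mats_def fromM_def)

lemma GL_det: assumes "A \<in> GL N" shows "det (toM N A) \<noteq> 0"
proof -
  obtain B where AB: "mat_mult N A B = mat_one N" using assms unfolding GL_def by blast
  have "det (toM N A) * det (toM N B) = det (toM N (mat_mult N A B))"
    by (simp add: toM_mult det_mult[OF toM_carrier toM_carrier])
  also have "\<dots> = 1" by (simp add: AB toM_one)
  finally show ?thesis by auto
qed

lemma det_GL: assumes A: "A \<in> mats N" and d: "det (toM N A) \<noteq> 0" shows "A \<in> GL N"
proof -
  have "toM N A \<in> Units (ring_mat TYPE(complex) N ())"
    by (rule det_non_zero_imp_unit[OF toM_carrier d])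
  then have "\<exists>M \<in> carrier_mat N N. M * toM N A = 1\<^sub>m N \<and> toM N A * M = 1\<^sub>m N"
    by (simp add: Units_def ring_mat_def)
  then obtain M where M: "M \<in> carrier_mat N N" "M * toM N A = 1\<^sub>m N" "toM N A * M = 1\<^sub>m N"
    by blast
  have 1: "mat_mult N A (fromM N M) = mat_one N"
    by (rule toM_inj[OF mat_mult_mats mat_one_mats]) (simp add: toM_mult toM_fromM M toM_one)
  have 2: "mat_mult N (fromM N M) A = mat_one N"
    by (rule toM_inj[OF mat_mult_mats mat_one_mats]) (simp add: toM_mult toM_fromM M toM_one)
  show ?thesis unfolding GL_def using A 1 2 fromM_mats by blast
qed


definition lin :: "(nat \<Rightarrow> nat \<Rightarrow> complex) \<Rightarrow> (nat \<Rightarrow> nat \<Rightarrow> complex) \<Rightarrow> complex \<Rightarrow> (nat \<Rightarrow> nat \<Rightarrow> complex)" where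
  "lin A1 A2 t = (\<lambda>i j. A1 i j + t * (A2 i j - A1 i j))"

lemma lin_0: "lin A1 A2 0 = A1" by (simp add: lin_def)
lemma lin_1: "lin A1 A2 1 = A2" by (simp add: lin_def)

lemma lin_mats: "A1 \<in> mats N \<Longrightarrow> A2 \<in> mats N \<Longrightarrow> lin A1 A2 t \<in> mats N"
  by (simp add: mats_def lin_def)

lemma poly_fun_line: "p \<in> poly_fun \<Longrightarrow> \<exists>r. \<forall>t. p (lin A1 A2 t) = poly r t"
proof (induction rule: poly_fun.induct)
  case (const c)
  show ?case by (rule exI[of _ "[:c:]"]) simp
next
  case (entry i j)
  show ?case by (rule exI[of _ "[:A1 i j, A2 i j - A1 i j:]"]) (simp add: lin_def algebra_simps)
next
  case (add p q)
  then obtain r1 r2 where "\<forall>t. p (lin A1 A2 t) = poly r1 t" "\<forall>t. q (lin A1 A2 t) = poly r2 t" by blast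
  then show ?case by (intro exI[of _ "r1 + r2"]) simp
next
  case (mult p q)
  then obtain r1 r2 where "\<forall>t. p (lin A1 A2 t) = poly r1 t" "\<forall>t. q (lin A1 A2 t) = poly r2 t" by blast
  then show ?case by (intro exI[of _ "r1 * r2"]) simp
qed

lemma det_line: "\<exists>q. \<forall>t. poly q t = det (toM N (lin A1 A2 t))"
proof (intro exI allI)
  fix t
  let ?PM = "mat N N (\<lambda>(i,j). [:A1 i j, A2 i j - A1 i j:])"
  have "map_mat (\<lambda>p. poly p t) ?PM = toM N (lin A1 A2 t)"
    by (rule eq_matI) (auto simp: toM_def lin_def algebra_simps)
  interpret h: comm_ring_hom "\<lambda>p. poly p t" by unfold_locales auto
  show "poly (det ?PM) t = det (toM N (lin A1 A2 t))"
    using h.hom_det[of ?PM] \<open>map_mat (\<lambda>p. poly p t) ?PM = toM N (lin A1 A2 t)\<close> by simp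
qed

lemma closed_line:
  assumes C: "zariski_closed N C" and A: "A1 \<in> mats N" "A2 \<in> mats N"
  shows "(\<forall>t. lin A1 A2 t \<in> C) \<or> finite {t. lin A1 A2 t \<in> C}"
proof -
  obtain P where P: "P \<subseteq> poly_fun" "C = {A \<in> mats N. \<forall>p \<in> P. p A = 0}"
    using C unfolding zariski_closed_def by blast
  show ?thesis
  proof (cases "\<forall>p\<in>P. \<forall>t. p (lin A1 A2 t) = 0")
    case True
    then show ?thesis using P lin_mats[OF A] by auto
  next
    case False
    then obtain p t0 where p: "p \<in> P" "p (lin A1 A2 t0) \<noteq> 0" by blast
    obtain r where r: "\<forall>t. p (lin A1 A2 t) = poly r t" using poly_fun_line p P(1) by blast
    have "r \<noteq> 0" using r p by auto
    then have "finite {t. poly r t = 0}" by (rule poly_roots_finite)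
    moreover have "{t. lin A1 A2 t \<in> C} \<subseteq> {t. poly r t = 0}" using P p r by auto
    ultimately show ?thesis using finite_subset by blast
  qed
qed


lemma mat_vec_lin: "mat_vec N (lin A1 A2 t) v = mat_vec N A1 v + sc t (mat_vec N A2 v) - sc t (mat_vec N A1 v)"
proof
  fix i
  show "mat_vec N (lin A1 A2 t) v i = (mat_vec N A1 v + sc t (mat_vec N A2 v) - sc t (mat_vec N A1 v)) i"
    by (simp add: mat_vec_def lin_def sc_def algebra_simps sum.distrib sum_subtractf sum_distrib_left)
qed

lemma lin_pres:
  assumes "mat_vec N A1 ` span_cols N X I = span_cols N X I"
    and "mat_vec N A2 ` span_cols N X I = span_cols N X I"
    and G: "lin A1 A2 t \<in> GL N"
  shows "mat_vec N (lin A1 A2 t) ` span_cols N X I = span_cols N X I"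
proof (rule GL_onto[OF G])
  show "mat_vec N (lin A1 A2 t) ` span_cols N X I \<subseteq> span_cols N X I"
  proof
    fix w assume "w \<in> mat_vec N (lin A1 A2 t) ` span_cols N X I"
    then obtain v where v: "v \<in> span_cols N X I" "w = mat_vec N (lin A1 A2 t) v" by blast
    have 1: "mat_vec N A1 v \<in> span_cols N X I" "mat_vec N A2 v \<in> span_cols N X I"
      using v(1) assms(1,2) by blast+
    show "w \<in> span_cols N X I" unfolding v(2) mat_vec_lin
      using 1 span_cols_subspace
      by (intro cv.subspace_diff cv.subspace_add cv.subspace_scale) auto
  qed
qed


lemma connected_abstract:
  assumes Hsub: "H \<subseteq> GL N"
    and Hlin: "\<And>A1 A2 t. A1 \<in> H \<Longrightarrow> A2 \<in> H \<Longrightarrow> det (toM N (lin A1 A2 t)) \<noteq> 0 \<Longrightarrow> lin A1 A2 t \<in> H"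
  shows "zariski_connected N H"
  unfolding zariski_connected_def
proof (intro notI, elim exE conjE)
  fix C1 C2
  assume C: "zariski_closed N C1" "zariski_closed N C2" "H \<subseteq> C1 \<union> C2"
      "H \<inter> C1 \<inter> C2 = {}" "H \<inter> C1 \<noteq> {}" "H \<inter> C2 \<noteq> {}"
  obtain A1 where A1: "A1 \<in> H" "A1 \<in> C1" using C(5) by blast
  obtain A2 where A2: "A2 \<in> H" "A2 \<in> C2" using C(6) by blast
  have G: "A1 \<in> GL N" "A2 \<in> GL N" using A1(1) A2(1) Hsub by (auto dest: subsetD)
  have M: "A1 \<in> mats N" "A2 \<in> mats N" using G unfolding GL_def by simp_all
  obtain q where q: "\<forall>t. poly q t = det (toM N (lin A1 A2 t))" using det_line by blast
  have "det (toM N (lin A1 A2 0)) \<noteq> 0" unfolding lin_0 by (rule GL_det[OF G(1)])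
  then have "poly q 0 \<noteq> 0" using q by simp
  then have "q \<noteq> 0" by auto
  then have fR: "finite {t. poly q t = 0}" by (rule poly_roots_finite)
  have cov: "UNIV \<subseteq> {t. lin A1 A2 t \<in> C1} \<union> {t. lin A1 A2 t \<in> C2} \<union> {t. poly q t = 0}"
  proof
    fix t :: complex
    show "t \<in> {t. lin A1 A2 t \<in> C1} \<union> {t. lin A1 A2 t \<in> C2} \<union> {t. poly q t = 0}"
    proof (cases "poly q t = 0")
      case False
      then have "det (toM N (lin A1 A2 t)) \<noteq> 0" using q by simp
      then have "lin A1 A2 t \<in> H" by (rule Hlin[OF A1(1) A2(1)])
      then have "lin A1 A2 t \<in> C1 \<union> C2" by (rule subsetD[OF C(3)])
      then show ?thesis by simp
    qed simp
  qed
  show False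
  proof (cases "\<forall>t. lin A1 A2 t \<in> C1")
    case True
    then have "A2 \<in> C1" using lin_1 by metis
    then show False using A2 C(4) by blast
  next
    case F1: False
    show False
    proof (cases "\<forall>t. lin A1 A2 t \<in> C2")
      case True
      then have "A1 \<in> C2" using lin_0 by metis
      then show False using A1 C(4) by blast
    next
      case False
      then have "finite {t. lin A1 A2 t \<in> C1}" "finite {t. lin A1 A2 t \<in> C2}"
        using closed_line[OF C(1) M] closed_line[OF C(2) M] F1 by blast+
      then have "finite ({t. lin A1 A2 t \<in> C1} \<union> {t. lin A1 A2 t \<in> C2} \<union> {t. poly q t = 0})"
        using fR by blast
      then have "finite (UNIV :: complex set)" using cov by (rule finite_subset[rotated])
      then show False using infinite_UNIV_char_0 by blast
    qed
  qed
qed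

theorem proposition1:
  fixes m n :: nat and g F :: "nat \<Rightarrow> nat \<Rightarrow> complex"
  assumes "g \<in> GL (m + n)" and "F \<in> GL (m + n)"
  shows "zariski_connected (m + n)
     {A \<in> GL (m + n).
        mat_vec (m + n) A ` span_cols (m + n) g {0..<m} = span_cols (m + n) g {0..<m} \<and>
        mat_vec (m + n) A ` span_cols (m + n) g {m..<m + n} = span_cols (m + n) g {m..<m + n} \<and>
        (\<forall>i \<le> m + n. mat_vec (m + n) A ` flag_space (m + n) F i = flag_space (m + n) F i)}"
proof (rule connected_abstract)
  fix A1 A2 t
  let ?N = "m + n"
  assume A1: "A1 \<in> {A \<in> GL (m + n).
        mat_vec (m + n) A ` span_cols (m + n) g {0..<m} = span_cols (m + n) g {0..<m} \<and>
        mat_vec (m + n) A ` span_cols (m + n) g {m..<m + n} = span_cols (m + n) g {m..<m + n} \<and>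
        (\<forall>i \<le> m + n. mat_vec (m + n) A ` flag_space (m + n) F i = flag_space (m + n) F i)}"
    and A2: "A2 \<in> {A \<in> GL (m + n).
        mat_vec (m + n) A ` span_cols (m + n) g {0..<m} = span_cols (m + n) g {0..<m} \<and>
        mat_vec (m + n) A ` span_cols (m + n) g {m..<m + n} = span_cols (m + n) g {m..<m + n} \<and>
        (\<forall>i \<le> m + n. mat_vec (m + n) A ` flag_space (m + n) F i = flag_space (m + n) F i)}"
    and d: "det (toM (m + n) (lin A1 A2 t)) \<noteq> 0"
  have a: "A1 \<in> GL ?N" "mat_vec ?N A1 ` span_cols ?N g {0..<m} = span_cols ?N g {0..<m}"
      "mat_vec ?N A1 ` span_cols ?N g {m..<m+n} = span_cols ?N g {m..<m+n}"
      "\<forall>i \<le> ?N. mat_vec ?N A1 ` flag_space ?N F i = flag_space ?N F i"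
    using A1 by simp_all
  have b: "A2 \<in> GL ?N" "mat_vec ?N A2 ` span_cols ?N g {0..<m} = span_cols ?N g {0..<m}"
      "mat_vec ?N A2 ` span_cols ?N g {m..<m+n} = span_cols ?N g {m..<m+n}"
      "\<forall>i \<le> ?N. mat_vec ?N A2 ` flag_space ?N F i = flag_space ?N F i"
    using A2 by simp_all
  have M: "A1 \<in> mats ?N" "A2 \<in> mats ?N" using a(1) b(1) unfolding GL_def by simp_all
  have G: "lin A1 A2 t \<in> GL ?N" by (rule det_GL[OF lin_mats[OF M] d])
  have c: "\<forall>i \<le> ?N. mat_vec ?N (lin A1 A2 t) ` flag_space ?N F i = flag_space ?N F i"
  proof (intro allI impI)
    fix i assume i: "i \<le> ?N"
    have "mat_vec ?N A1 ` span_cols ?N F {0..<i} = span_cols ?N F {0..<i}"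
      using a(4) i unfolding flag_space_def by blast
    moreover have "mat_vec ?N A2 ` span_cols ?N F {0..<i} = span_cols ?N F {0..<i}"
      using b(4) i unfolding flag_space_def by blast
    ultimately show "mat_vec ?N (lin A1 A2 t) ` flag_space ?N F i = flag_space ?N F i"
      unfolding flag_space_def using lin_pres G by blast
  qed
  have e1: "mat_vec ?N (lin A1 A2 t) ` span_cols ?N g {0..<m} = span_cols ?N g {0..<m}"
    by (rule lin_pres[OF a(2) b(2) G])
  have e2: "mat_vec ?N (lin A1 A2 t) ` span_cols ?N g {m..<m+n} = span_cols ?N g {m..<m+n}"
    by (rule lin_pres[OF a(3) b(3) G])
  show "lin A1 A2 t \<in> {A \<in> GL (m + n).
        mat_vec (m + n) A ` span_cols (m + n) g {0..<m} = span_cols (m + n) g {0..<m} \<and>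
        mat_vec (m + n) A ` span_cols (m + n) g {m..<m + n} = span_cols (m + n) g {m..<m + n} \<and>
        (\<forall>i \<le> m + n. mat_vec (m + n) A ` flag_space (m + n) F i = flag_space (m + n) F i)}"
    using G e1 e2 c by simp
qed blast


end
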